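(* Let $\mathcal{X}' := \mathcal{X}\times\mathcal{X}^{|\mathcal{N}|}$, let $\Phi:\mathcal{X}'\to\mathcal{R}$ be a one-to-one (invertible) representation function with inverse $\Psi:\mathcal{R}\to\mathcal{X}'$, and write $r=\Phi(\mathbf{x})$. Let $h:\mathcal{R}\times\{0,1\}\times[0,1]\to\mathcal{Y}$ be a hypothesis and $L:\mathcal{Y}\times\mathcal{Y}\to\mathbb{R}_+$ a loss function. Let $w_\eta$ be a weight function and $q_\eta(\mathbf{x}\mid t,z)$ the associated reweighted distribution (see context). Let $G$ be a family of real-valued functions on $\mathcal{R}\times\{0,1\}\times[0,1]$, and assume there is a constant $B_\Phi>0$ such that the function $(r,t,z)\mapsto \frac{1}{B_\Phi}\,\ell_{h,\Phi}(\Psi(r),t,z)$ belongs to $G$. Then $$\epsilon_{CF}\le \epsilon_F^{\eta}+B_\Phi\cdot \mathrm{IPM}_G\big(p_\Phi(r)\,p(t,z),\; q_{\Phi,\eta}(r\mid t,z)\,p(t,z)\big),$$ where $p_\Phi(r)$ and $q_{\Phi,\eta}(r\mid t,z)$ are the distributions of $r=\Phi(\mathbf{x})$ when $\mathbf{x}\sim p(\mathbf{x})$ and $\mathbf{x}\sim q_\eta(\mathbf{x}\mid t,z)$, respectively.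
   Context: Setting: each unit has a combined feature vector $\mathbf{x}\in\mathcal{X}'=\mathcal{X}\times\mathcal{X}^{|\mathcal{N}|}$ (its own features and its neighbours' features), a binary individual treatment $t\in\{0,1\}$ and a neighbourhood exposure $z\in[0,1]$. There is a joint distribution of $(\mathbf{x},t,z)$ with marginals $p(\mathbf{x})$, $p(t,z)$ and conditionals $p(\mathbf{x}\mid t,z)$. For each $(t,z)$ there is a potential outcome $y(t,z)\in\mathcal{Y}$ with conditional density $p(y(t,z)\mid\mathbf{x})$. Per-unit expected loss: $\ell_{h,\Phi}(\mathbf{x},t,z)=\int_{\mathcal{Y}} L\big(y(t,z),h(\Phi(\mathbf{x}),t,z)\big)\,p(y(t,z)\mid\mathbf{x})\,dy(t,z)$. Factual loss: $\epsilon_F=\mathbb{E}_{p(t,z)}\big[\int \ell_{h,\Phi}(\mathbf{x},t,z)\,p(\mathbf{x}\mid t,z)\,d\mathbf{x}\big]$. Counterfactual loss: $\epsilon_{CF}=\mathbb{E}_{p(t,z)}\Big[\mathbb{E}_{p(t',z')}\big[\int \ell_{h,\Phi}(\mathbf{x},t,z)\,p(\mathbf{x}\mid t',z')\,d\mathbf{x}\big]\Big]$, where $(t',z')$ is an independent copy with distribution $p(t,z)$. Weights: $w_\eta:\{0,1\}\times[0,1]\times\mathcal{X}'\to(0,\infty)$ is a weight function such that for every $(t,z)$ the normalizer $c(t,z)=\int w_\eta(t,z,\mathbf{x})p(\mathbf{x}\mid t,z)d\mathbf{x}$ is finite and positive; the reweighted distribution is $q_\eta(\mathbf{x}\mid t,z)=w_\eta(t,z,\mathbf{x})p(\mathbf{x}\mid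 t,z)/c(t,z)$. Reweighted factual loss: $\epsilon_F^{\eta}=\mathbb{E}_{p(t,z)}\big[\int \ell_{h,\Phi}(\mathbf{x},t,z)\,q_\eta(\mathbf{x}\mid t,z)\,d\mathbf{x}\big]$. Integral probability metric: for distributions $P,Q$ on $\mathcal{R}\times\{0,1\}\times[0,1]$, $\mathrm{IPM}_G(P,Q)=\sup_{g\in G}\left|\int g\,dP-\int g\,dQ\right|$; here $p_\Phi(r)p(t,z)$ is the product distribution and $q_{\Phi,\eta}(r\mid t,z)p(t,z)$ is the joint distribution with $(t,z)\sim p(t,z)$ and then $r\sim q_{\Phi,\eta}(\cdot\mid t,z)$. *)

theory Defs
  imports "HOL-Probability.Probability"
begin

text \<open>Measurable space of (individual treatment, neighbourhood exposure):
  t \<in> {0,1}, z \<in> [0,1].\<close>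
definition TZ :: "(nat \<times> real) measure" where
  "TZ = count_space {0, 1} \<Otimes>\<^sub>M restrict_space borel {0..1}"

definition exp_loss ::
  "('y \<Rightarrow> 'y \<Rightarrow> real) \<Rightarrow> ('r \<Rightarrow> nat \<Rightarrow> real \<Rightarrow> 'y) \<Rightarrow> ('x \<Rightarrow> 'r)
   \<Rightarrow> ('x \<Rightarrow> nat \<times> real \<Rightarrow> 'y measure) \<Rightarrow> 'x \<Rightarrow> nat \<Rightarrow> real \<Rightarrow> real" where
  "exp_loss L h \<Phi> PY x t z = (\<integral>y. L y (h (\<Phi> x) t z) \<partial>(PY x (t, z)))"

definition factual_loss ::
  "((nat \<times> real) measure) \<Rightarrow> (nat \<times> real \<Rightarrow> 'x measure) \<Rightarrow> ('x \<Rightarrow> nat \<Rightarrow> real \<Rightarrow> real) \<Rightarrow> real" where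
  "factual_loss PTZ K l = (\<integral>tz. (\<integral>x. l x (fst tz) (snd tz) \<partial>(K tz)) \<partial>PTZ)"

definition counterfactual_loss ::
  "((nat \<times> real) measure) \<Rightarrow> (nat \<times> real \<Rightarrow> 'x measure) \<Rightarrow> ('x \<Rightarrow> nat \<Rightarrow> real \<Rightarrow> real) \<Rightarrow> real" where
  "counterfactual_loss PTZ K l =
     (\<integral>tz. (\<integral>tz'. (\<integral>x. l x (fst tz) (snd tz) \<partial>(K tz')) \<partial>PTZ) \<partial>PTZ)"

definition weight_normalizer ::
  "(nat \<times> real \<Rightarrow> 'x measure) \<Rightarrow> (nat \<times> real \<Rightarrow> 'x \<Rightarrow> real) \<Rightarrow> nat \<times> real \<Rightarrow> real" where
  "weight_normalizer K w tz = (\<integral>x. w tz x \<partial>(K tz))"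

definition reweighted ::
  "(nat \<times> real \<Rightarrow> 'x measure) \<Rightarrow> (nat \<times> real \<Rightarrow> 'x \<Rightarrow> real) \<Rightarrow> nat \<times> real \<Rightarrow> 'x measure" where
  "reweighted K w tz = density (K tz) (\<lambda>x. ennreal (w tz x / weight_normalizer K w tz))"

text \<open>Integral probability metric (valued in the extended reals, since the
  supremum may be infinite).\<close>
definition IPM :: "('a \<Rightarrow> real) set \<Rightarrow> 'a measure \<Rightarrow> 'a measure \<Rightarrow> ereal" where
  "IPM G P Q = (SUP g\<in>G. ereal \<bar>(\<integral>v. g v \<partial>P) - (\<integral>v. g v \<partial>Q)\<bar>)"

definition rep_product ::
  "'r measure \<Rightarrow> ((nat \<times> real) measure) \<Rightarrow> (nat \<times> real \<Rightarrow> 'x measure) \<Rightarrow> ('x \<Rightarrow> 'r)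
   \<Rightarrow> ('r \<times> (nat \<times> real)) measure" where
  "rep_product R PTZ K \<Phi> = distr (PTZ \<bind> K) R \<Phi> \<Otimes>\<^sub>M PTZ"

definition rep_reweighted_joint ::
  "'r measure \<Rightarrow> ((nat \<times> real) measure) \<Rightarrow> (nat \<times> real \<Rightarrow> 'x measure)
   \<Rightarrow> (nat \<times> real \<Rightarrow> 'x \<Rightarrow> real) \<Rightarrow> ('x \<Rightarrow> 'r) \<Rightarrow> ('r \<times> (nat \<times> real)) measure" where
  "rep_reweighted_joint R PTZ K w \<Phi> =
     PTZ \<bind> (\<lambda>tz. distr (reweighted K w tz) (R \<Otimes>\<^sub>M TZ) (\<lambda>x. (\<Phi> x, tz)))"

end

theory Submission
  imports Defs
begin

lemma nn_enn2real_eq: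
  fixes F :: "'a \<Rightarrow> ennreal"
  assumes "F \<in> borel_measurable M" "(\<integral>\<^sup>+x. F x \<partial>M) \<noteq> \<infinity>"
  shows "(\<integral>\<^sup>+x. ennreal (enn2real (F x)) \<partial>M) = (\<integral>\<^sup>+x. F x \<partial>M)"
proof -
  have "AE x in M. F x \<noteq> \<infinity>" by (rule nn_integral_PInf_AE[OF assms])
  then show ?thesis by (intro nn_integral_cong_AE) (auto simp: less_top)
qed

lemma integral_enn2real:
  fixes G :: "'a \<Rightarrow> ennreal" and g :: "'a \<Rightarrow> real"
  assumes G: "G \<in> borel_measurable M" and eq: "\<And>a. a \<in> space M \<Longrightarrow> g a = enn2real (G a)"
  shows "integral\<^sup>L M g = enn2real (\<integral>\<^sup>+x. ennreal (enn2real (G x)) \<partial>M)"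
proof -
  have "(\<lambda>a. enn2real (G a)) \<in> borel_measurable M" using G by measurable
  then have gm: "g \<in> borel_measurable M"
    using measurable_cong[of M g "\<lambda>a. enn2real (G a)"] eq by auto
  have "integral\<^sup>L M g = enn2real (\<integral>\<^sup>+x. ennreal (g x) \<partial>M)"
    by (rule integral_eq_nn_integral[OF gm]) (auto simp: eq)
  also have "\<dots> = enn2real (\<integral>\<^sup>+x. ennreal (enn2real (G x)) \<partial>M)"
    by (intro arg_cong[where f=enn2real] nn_integral_cong) (simp add: eq)
  finally show ?thesis .
qed

theorem lemma1:
  fixes X :: "'x measure" and R :: "'r measure" and Y :: "'y measure"
    and PTZ :: "(nat \<times> real) measure"
    and K :: "nat \<times> real \<Rightarrow> 'x measure"
    and PY :: "'x \<Rightarrow> nat \<times> real \<Rightarrow> 'y measure"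
    and \<Phi> :: "'x \<Rightarrow> 'r" and \<Psi> :: "'r \<Rightarrow> 'x"
    and h :: "'r \<Rightarrow> nat \<Rightarrow> real \<Rightarrow> 'y"
    and L :: "'y \<Rightarrow> 'y \<Rightarrow> real"
    and w :: "nat \<times> real \<Rightarrow> 'x \<Rightarrow> real"
    and G :: "('r \<times> (nat \<times> real) \<Rightarrow> real) set"
    and B :: real
  assumes PTZ: "prob_space PTZ" "sets PTZ = sets TZ"
    and K_prob: "\<And>tz. tz \<in> space TZ \<Longrightarrow> prob_space (K tz)"
    and K_sets: "\<And>tz. tz \<in> space TZ \<Longrightarrow> sets (K tz) = sets X"
    and K_meas: "K \<in> measurable TZ (subprob_algebra X)"
    and PY_prob: "\<And>x tz. x \<in> space X \<Longrightarrow> tz \<in> space TZ \<Longrightarrow> prob_space (PY x tz)"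
    and PY_sets: "\<And>x tz. x \<in> space X \<Longrightarrow> tz \<in> space TZ \<Longrightarrow> sets (PY x tz) = sets Y"
    and PY_meas: "(\<lambda>(x, tz). PY x tz) \<in> measurable (X \<Otimes>\<^sub>M TZ) (subprob_algebra Y)"
    and Phi_meas: "\<Phi> \<in> measurable X R"
    and Psi_meas: "\<Psi> \<in> measurable R X"
    and Psi_Phi: "\<And>x. x \<in> space X \<Longrightarrow> \<Psi> (\<Phi> x) = x"
    and Phi_Psi: "\<And>r. r \<in> space R \<Longrightarrow> \<Phi> (\<Psi> r) = r"
    and h_meas: "(\<lambda>(r, tz). h r (fst tz) (snd tz)) \<in> measurable (R \<Otimes>\<^sub>M TZ) Y"
    and L_nonneg: "\<And>y y'. L y y' \<ge> 0"
    and L_meas: "(\<lambda>(y, y'). L y y') \<in> borel_measurable (Y \<Otimes>\<^sub>M Y)"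
    and w_pos: "\<And>tz x. w tz x > 0"
    and w_meas: "(\<lambda>(tz, x). w tz x) \<in> borel_measurable (TZ \<Otimes>\<^sub>M X)"
    and w_int: "\<And>tz. tz \<in> space TZ \<Longrightarrow> integrable (K tz) (w tz)"
    and B_pos: "B > 0"
    and G_mem: "(\<lambda>(r, tz). exp_loss L h \<Phi> PY (\<Psi> r) (fst tz) (snd tz) / B) \<in> G"
    and int_P: "integrable (rep_product R PTZ K \<Phi>)
                  (\<lambda>(r, tz). exp_loss L h \<Phi> PY (\<Psi> r) (fst tz) (snd tz))"
    and int_Q: "integrable (rep_reweighted_joint R PTZ K w \<Phi>)
                  (\<lambda>(r, tz). exp_loss L h \<Phi> PY (\<Psi> r) (fst tz) (snd tz))"
  shows "ereal (counterfactual_loss PTZ K (exp_loss L h \<Phi> PY))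
           \<le> ereal (factual_loss PTZ (reweighted K w) (exp_loss L h \<Phi> PY))
             + ereal B * IPM G (rep_product R PTZ K \<Phi>) (rep_reweighted_joint R PTZ K w \<Phi>)"
proof -
  define l where "l = (\<lambda>x tz. exp_loss L h \<Phi> PY x (fst tz) (snd tz))"
  have spPTZ: "space PTZ = space TZ" using PTZ(2) by (rule sets_eq_imp_space_eq)
  have Lc[measurable]: "(\<lambda>q. L (fst q) (snd q)) \<in> borel_measurable (Y \<Otimes>\<^sub>M Y)"
    using L_meas by (simp add: case_prod_beta')
  have hc[measurable]: "(\<lambda>q. h (fst q) (fst (snd q)) (snd (snd q))) \<in> measurable (R \<Otimes>\<^sub>M TZ) Y"
    using h_meas by (simp add: case_prod_beta')
  note Phi_meas[measurable] Psi_meas[measurable] PY_meas[measurable] K_meas[measurable]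
  have l_nonneg: "\<And>x tz. 0 \<le> l x tz"
    unfolding l_def exp_loss_def by (auto intro!: Bochner_Integration.integral_nonneg L_nonneg)
  have H_meas: "(\<lambda>p. h (\<Phi> (fst p)) (fst (snd p)) (snd (snd p))) \<in> measurable (X \<Otimes>\<^sub>M TZ) Y"
  proof -
    have "(\<lambda>p. (\<Phi> (fst p), snd p)) \<in> measurable (X \<Otimes>\<^sub>M TZ) (R \<Otimes>\<^sub>M TZ)" by measurable
    from measurable_compose[OF this hc] show ?thesis by simp
  qed
  have LH_meas: "(\<lambda>q. L (snd q) (h (\<Phi> (fst (fst q))) (fst (snd (fst q))) (snd (snd (fst q)))))
      \<in> borel_measurable ((X \<Otimes>\<^sub>M TZ) \<Otimes>\<^sub>M Y)"
  proof -
    have "(\<lambda>q. (snd q, h (\<Phi> (fst (fst q))) (fst (snd (fst q))) (snd (snd (fst q)))))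
       \<in> measurable ((X \<Otimes>\<^sub>M TZ) \<Otimes>\<^sub>M Y) (Y \<Otimes>\<^sub>M Y)"
      using measurable_compose[OF measurable_fst H_meas] by measurable
    from measurable_compose[OF this Lc] show ?thesis by simp
  qed
  have lnn_meas: "(\<lambda>p. \<integral>\<^sup>+y. ennreal (L y (h (\<Phi> (fst p)) (fst (snd p)) (snd (snd p)))) \<partial>(case p of (x, tz) \<Rightarrow> PY x tz))
      \<in> borel_measurable (X \<Otimes>\<^sub>M TZ)"
    apply (rule nn_integral_measurable_subprob_algebra2[where N=Y, OF _ PY_meas])
    using LH_meas by (simp add: case_prod_beta')
  have Lsec: "\<And>c. c \<in> space Y \<Longrightarrow> (\<lambda>y. L y c) \<in> borel_measurable Y"
    using measurable_compose[OF measurable_Pair2' Lc] by simp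
  have l_meas: "(\<lambda>p. l (fst p) (snd p)) \<in> borel_measurable (X \<Otimes>\<^sub>M TZ)"
  proof -
    have "(\<lambda>p. enn2real (\<integral>\<^sup>+y. ennreal (L y (h (\<Phi> (fst p)) (fst (snd p)) (snd (snd p)))) \<partial>(case p of (x, tz) \<Rightarrow> PY x tz)))
      \<in> borel_measurable (X \<Otimes>\<^sub>M TZ)" using lnn_meas by measurable
    moreover have "\<And>p. p \<in> space (X \<Otimes>\<^sub>M TZ) \<Longrightarrow> l (fst p) (snd p) =
       enn2real (\<integral>\<^sup>+y. ennreal (L y (h (\<Phi> (fst p)) (fst (snd p)) (snd (snd p)))) \<partial>(case p of (x, tz) \<Rightarrow> PY x tz))"
    proof -
      fix p assume p: "p \<in> space (X \<Otimes>\<^sub>M TZ)"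
      then have px: "fst p \<in> space X" and pt: "snd p \<in> space TZ" by (auto simp: space_pair_measure)
      have hY: "h (\<Phi> (fst p)) (fst (snd p)) (snd (snd p)) \<in> space Y"
        using measurable_space[OF H_meas p] by simp
      have m: "(\<lambda>y. L y (h (\<Phi> (fst p)) (fst (snd p)) (snd (snd p)))) \<in> borel_measurable (PY (fst p) (snd p))"
        by (subst measurable_cong_sets[OF PY_sets[OF px pt] refl]) (rule Lsec[OF hY])
      show "l (fst p) (snd p) =
       enn2real (\<integral>\<^sup>+y. ennreal (L y (h (\<Phi> (fst p)) (fst (snd p)) (snd (snd p)))) \<partial>(case p of (x, tz) \<Rightarrow> PY x tz))"
        using integral_eq_nn_integral[OF m] L_nonneg
        by (simp add: l_def exp_loss_def case_prod_beta)
    qed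
    ultimately show ?thesis using measurable_cong by (smt (verit))
  qed
  have l_sec: "\<And>tz. tz \<in> space TZ \<Longrightarrow> (\<lambda>x. l x tz) \<in> borel_measurable X"
    using measurable_Pair1[OF l_meas] by simp
  define f where "f = (\<lambda>v. l (\<Psi> (fst v)) (snd v))"
  have f_eq: "(\<lambda>(r, tz). exp_loss L h \<Phi> PY (\<Psi> r) (fst tz) (snd tz)) = f"
    by (auto simp: f_def l_def fun_eq_iff)
  have f_meas: "f \<in> borel_measurable (R \<Otimes>\<^sub>M TZ)"
  proof -
    have "(\<lambda>v. (\<Psi> (fst v), snd v)) \<in> measurable (R \<Otimes>\<^sub>M TZ) (X \<Otimes>\<^sub>M TZ)" by measurable
    from measurable_compose[OF this l_meas] show ?thesis by (simp add: f_def)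
  qed
  have f_nonneg: "\<And>v. 0 \<le> f v" by (simp add: f_def l_nonneg)
  have KP: "K \<in> measurable PTZ (subprob_algebra X)"
    by (subst measurable_cong_sets[OF PTZ(2) refl]) (rule K_meas)
  have ne: "space PTZ \<noteq> {}"
  proof -
    have "(0::nat, 0::real) \<in> space TZ" by (simp add: TZ_def space_pair_measure)
    then show ?thesis using spPTZ by auto
  qed
  interpret PS: prob_space PTZ by (rule PTZ(1))
  have spK: "\<And>tz. tz \<in> space PTZ \<Longrightarrow> space (K tz) = space X"
    using K_sets spPTZ by (metis sets_eq_imp_space_eq)
  have setsB: "sets (PTZ \<bind> K) = sets X"
    using K_sets spPTZ ne by (intro sets_bind) auto
  define D where "D = distr (PTZ \<bind> K) R \<Phi>"
  have setsD: "sets D = sets R" by (simp add: D_def)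
  have Phi_B: "\<Phi> \<in> measurable (PTZ \<bind> K) R"
    by (subst measurable_cong_sets[OF setsB refl]) (rule Phi_meas)
  have "subprob_space (PTZ \<bind> K)"
    by (rule subprob_space_bind[OF PS.subprob_space_axioms KP])
  then interpret BF: subprob_space "PTZ \<bind> K" .
  interpret DF: finite_measure D unfolding D_def by (rule BF.finite_measure_distr[OF Phi_B])
  interpret PP: pair_sigma_finite D PTZ by unfold_locales
  have setsDP: "sets (D \<Otimes>\<^sub>M PTZ) = sets (R \<Otimes>\<^sub>M TZ)"
    by (rule sets_pair_measure_cong[OF setsD PTZ(2)])
  have f_measDP: "(\<lambda>v. ennreal (f v)) \<in> borel_measurable (D \<Otimes>\<^sub>M PTZ)"
    by (subst measurable_cong_sets[OF setsDP refl]) (use f_meas in measurable)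
  define N3 where "N3 = (\<lambda>tz tz'. \<integral>\<^sup>+x. ennreal (l x tz) \<partial>K tz')"
  define N2 where "N2 = (\<lambda>tz. \<integral>\<^sup>+tz'. N3 tz tz' \<partial>PTZ)"
  define T where "T = (\<integral>\<^sup>+tz. N2 tz \<partial>PTZ)"
  have nnP: "(\<integral>\<^sup>+v. ennreal (f v) \<partial>(rep_product R PTZ K \<Phi>)) = T"
  proof -
    have "(\<integral>\<^sup>+v. ennreal (f v) \<partial>(rep_product R PTZ K \<Phi>)) = (\<integral>\<^sup>+tz. \<integral>\<^sup>+r. ennreal (f (r, tz)) \<partial>D \<partial>PTZ)"
      unfolding rep_product_def D_def[symmetric] by (rule PP.nn_integral_snd[symmetric, OF f_measDP])
    also have "\<dots> = T" unfolding T_def N2_def N3_def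
    proof (rule nn_integral_cong)
      fix tz assume tz: "tz \<in> space PTZ"
      then have tzT: "tz \<in> space TZ" using spPTZ by simp
      have fr: "(\<lambda>r. ennreal (f (r, tz))) \<in> borel_measurable R"
        using measurable_Pair1[OF f_meas tzT] by measurable
      have fx: "(\<lambda>x. ennreal (f (\<Phi> x, tz))) \<in> borel_measurable X"
        using measurable_compose[OF Phi_meas fr] by simp
      have "(\<integral>\<^sup>+r. ennreal (f (r, tz)) \<partial>D) = (\<integral>\<^sup>+x. ennreal (f (\<Phi> x, tz)) \<partial>(PTZ \<bind> K))"
        unfolding D_def by (rule nn_integral_distr[OF Phi_B]) (simp add: fr)
      also have "\<dots> = (\<integral>\<^sup>+tz'. \<integral>\<^sup>+x. ennreal (f (\<Phi> x, tz)) \<partial>K tz' \<partial>PTZ)"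
        by (rule nn_integral_bind[OF fx KP])
      also have "\<dots> = (\<integral>\<^sup>+tz'. \<integral>\<^sup>+x. ennreal (l x tz) \<partial>K tz' \<partial>PTZ)"
        by (intro nn_integral_cong) (simp add: f_def Psi_Phi spK)
      finally show "(\<integral>\<^sup>+r. ennreal (f (r, tz)) \<partial>D) = (\<integral>\<^sup>+tz'. \<integral>\<^sup>+x. ennreal (l x tz) \<partial>K tz' \<partial>PTZ)" .
    qed
    finally show ?thesis .
  qed
  have T_fin: "T \<noteq> \<infinity>"
    using integrableD(2)[OF int_P[unfolded f_eq]] nnP by simp
  have f_measP: "f \<in> borel_measurable (rep_product R PTZ K \<Phi>)"
    unfolding rep_product_def D_def[symmetric]
    by (subst measurable_cong_sets[OF setsDP refl]) (rule f_meas)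
  have intP: "integral\<^sup>L (rep_product R PTZ K \<Phi>) f = enn2real T"
    using integral_eq_nn_integral[OF f_measP] f_nonneg nnP by simp
  have setsTT: "sets (TZ \<Otimes>\<^sub>M PTZ) = sets (TZ \<Otimes>\<^sub>M TZ)"
    by (rule sets_pair_measure_cong[OF refl PTZ(2)])
  have N3_meas: "(\<lambda>p. N3 (fst p) (snd p)) \<in> borel_measurable (TZ \<Otimes>\<^sub>M TZ)"
  proof -
    have K2: "(\<lambda>p. K (snd p)) \<in> measurable (TZ \<Otimes>\<^sub>M TZ) (subprob_algebra X)"
      using measurable_compose[OF measurable_snd K_meas] by simp
    have "(\<lambda>q. (snd q, fst (fst q))) \<in> measurable ((TZ \<Otimes>\<^sub>M TZ) \<Otimes>\<^sub>M X) (X \<Otimes>\<^sub>M TZ)" by measurable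
    from measurable_compose[OF this l_meas]
    have "(\<lambda>(p, x). ennreal (l x (fst p))) \<in> borel_measurable ((TZ \<Otimes>\<^sub>M TZ) \<Otimes>\<^sub>M X)"
      by (simp add: case_prod_beta')
    from nn_integral_measurable_subprob_algebra2[OF this K2] show ?thesis
      by (simp add: N3_def)
  qed
  have N3_measP: "(\<lambda>(tz, tz'). N3 tz tz') \<in> borel_measurable (TZ \<Otimes>\<^sub>M PTZ)"
    by (subst measurable_cong_sets[OF setsTT refl]) (use N3_meas in \<open>simp add: case_prod_beta'\<close>)
  have N3_sec: "\<And>tz. tz \<in> space TZ \<Longrightarrow> N3 tz \<in> borel_measurable PTZ"
    using measurable_Pair2[OF N3_measP] by simp
  define G' where "G' = (\<lambda>tz. \<integral>\<^sup>+tz'. ennreal (enn2real (N3 tz tz')) \<partial>PTZ)"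
  have G'_meas: "G' \<in> borel_measurable TZ"
  proof -
    have "(\<lambda>(tz, tz'). ennreal (enn2real (N3 tz tz'))) \<in> borel_measurable (TZ \<Otimes>\<^sub>M PTZ)"
      using N3_measP by measurable
    from PS.borel_measurable_nn_integral[OF this] show ?thesis by (simp add: G'_def)
  qed
  have N2_meas: "N2 \<in> borel_measurable TZ"
    using PS.borel_measurable_nn_integral[OF N3_measP] by (simp add: N2_def)
  have G'_measP: "G' \<in> borel_measurable PTZ" and N2_measP: "N2 \<in> borel_measurable PTZ"
    using G'_meas N2_meas measurable_cong_sets[OF PTZ(2) refl] by auto
  have AE_N2: "AE tz in PTZ. N2 tz \<noteq> \<infinity>"
    by (rule nn_integral_PInf_AE[OF N2_measP]) (use T_fin T_def in simp)
  have G'T: "(\<integral>\<^sup>+tz. G' tz \<partial>PTZ) = T"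
    unfolding T_def
  proof (rule nn_integral_cong_AE)
    show "AE tz in PTZ. G' tz = N2 tz"
      using AE_N2 AE_space
    proof eventually_elim
      case (elim tz)
      then show ?case unfolding G'_def N2_def
        by (intro nn_enn2real_eq N3_sec) (auto simp: spPTZ)
    qed
  qed
  have CF: "counterfactual_loss PTZ K (exp_loss L h \<Phi> PY) = enn2real T"
  proof -
    have "counterfactual_loss PTZ K (exp_loss L h \<Phi> PY)
        = (\<integral>tz. (\<integral>tz'. (\<integral>x. l x tz \<partial>K tz') \<partial>PTZ) \<partial>PTZ)"
      by (simp add: counterfactual_loss_def l_def)
    also have "\<dots> = enn2real (\<integral>\<^sup>+tz. ennreal (enn2real (G' tz)) \<partial>PTZ)"
    proof (rule integral_enn2real[OF G'_measP])
      fix tz assume tz: "tz \<in> space PTZ"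
      show "(\<integral>tz'. (\<integral>x. l x tz \<partial>K tz') \<partial>PTZ) = enn2real (G' tz)"
        unfolding G'_def
      proof (rule integral_enn2real[OF N3_sec])
        show "tz \<in> space TZ" using tz spPTZ by simp
        fix tz' assume tz': "tz' \<in> space PTZ"
        have m: "(\<lambda>x. l x tz) \<in> borel_measurable (K tz')"
          using tz tz' spPTZ K_sets l_sec by (metis measurable_cong_sets)
        show "(\<integral>x. l x tz \<partial>K tz') = enn2real (N3 tz tz')"
          unfolding N3_def by (rule integral_eq_nn_integral[OF m]) (simp add: l_nonneg)
      qed
    qed
    also have "\<dots> = enn2real T"
      using nn_enn2real_eq[OF G'_measP] G'T T_fin by simp
    finally show ?thesis .
  qed
  define c where "c = weight_normalizer K w"
  have w_sec: "\<And>tz. tz \<in> space TZ \<Longrightarrow> w tz \<in> borel_measurable X"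
  proof -
    fix tz assume "tz \<in> space TZ"
    from measurable_Pair2[OF w_meas this] show "w tz \<in> borel_measurable X" by simp
  qed
  have c_pos: "\<And>tz. tz \<in> space TZ \<Longrightarrow> 0 < c tz"
  proof -
    fix tz assume tz: "tz \<in> space TZ"
    interpret Kp: prob_space "K tz" by (rule K_prob[OF tz])
    have nn: "0 \<le> c tz" unfolding c_def weight_normalizer_def
      by (rule Bochner_Integration.integral_nonneg) (simp add: less_imp_le w_pos)
    have "c tz \<noteq> 0"
    proof
      assume "c tz = 0"
      then have "AE x in K tz. w tz x = 0"
        unfolding c_def weight_normalizer_def
        using integral_nonneg_eq_0_iff_AE[OF w_int[OF tz]] w_pos by (simp add: less_imp_le)
      then have "AE x in K tz. False"
      proof eventually_elim
        case (elim x) then show ?case using w_pos[of tz x] by simp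
      qed
      then show False using Kp.AE_False by simp
    qed
    with nn show "0 < c tz" by simp
  qed
  have c_meas: "c \<in> borel_measurable TZ"
  proof -
    have "(\<lambda>(tz, x). ennreal (w tz x)) \<in> borel_measurable (TZ \<Otimes>\<^sub>M X)" using w_meas by measurable
    from nn_integral_measurable_subprob_algebra2[OF this K_meas]
    have "(\<lambda>tz. enn2real (\<integral>\<^sup>+x. ennreal (w tz x) \<partial>K tz)) \<in> borel_measurable TZ" by measurable
    moreover have "\<And>tz. tz \<in> space TZ \<Longrightarrow> c tz = enn2real (\<integral>\<^sup>+x. ennreal (w tz x) \<partial>K tz)"
      unfolding c_def weight_normalizer_def
      using w_int w_pos by (auto intro!: integral_eq_nn_integral simp: less_imp_le)
    ultimately show ?thesis using measurable_cong by (smt (verit))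
  qed
  define qk where "qk = reweighted K w"
  have qk_def': "\<And>tz. qk tz = density (K tz) (\<lambda>x. ennreal (w tz x / c tz))"
    by (simp add: qk_def reweighted_def c_def)
  have qk_sets: "\<And>tz. tz \<in> space TZ \<Longrightarrow> sets (qk tz) = sets X"
    by (simp add: qk_def' K_sets)
  have qk_space: "\<And>tz. tz \<in> space TZ \<Longrightarrow> space (qk tz) = space X"
    using qk_sets by (metis sets_eq_imp_space_eq)
  have wc_meas: "\<And>tz. tz \<in> space TZ \<Longrightarrow> (\<lambda>x. ennreal (w tz x / c tz)) \<in> borel_measurable (K tz)"
  proof -
    fix tz assume tz: "tz \<in> space TZ"
    note w_sec[OF tz, measurable]
    show "(\<lambda>x. ennreal (w tz x / c tz)) \<in> borel_measurable (K tz)"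
      by (subst measurable_cong_sets[OF K_sets[OF tz] refl]) measurable
  qed
  have qk_prob: "\<And>tz. tz \<in> space TZ \<Longrightarrow> prob_space (qk tz)"
  proof -
    fix tz assume tz: "tz \<in> space TZ"
    have "emeasure (qk tz) (space (qk tz)) = (\<integral>\<^sup>+x. ennreal (w tz x / c tz) \<partial>K tz)"
      unfolding qk_def' by (simp add: emeasure_density wc_meas[OF tz])
    also have "\<dots> = ennreal (\<integral>x. w tz x / c tz \<partial>K tz)"
    proof (rule nn_integral_eq_integral)
      show "integrable (K tz) (\<lambda>x. w tz x / c tz)" using w_int[OF tz] by simp
      have "\<And>x. 0 \<le> w tz x / c tz" using w_pos[of tz] c_pos[OF tz] by (simp add: less_imp_le)
      then show "AE x in K tz. 0 \<le> w tz x / c tz" by simp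
    qed
    also have "\<dots> = 1" using c_pos[OF tz] by (simp add: c_def weight_normalizer_def)
    finally show "prob_space (qk tz)" by (rule prob_spaceI)
  qed
  have qk_meas: "qk \<in> measurable TZ (subprob_algebra X)"
  proof (rule measurable_subprob_algebra)
    fix tz assume tz: "tz \<in> space TZ"
    show "subprob_space (qk tz)" by (rule prob_space_imp_subprob_space[OF qk_prob[OF tz]])
    show "sets (qk tz) = sets X" by (rule qk_sets[OF tz])
  next
    fix A assume A[measurable]: "A \<in> sets X"
    note c_meas[measurable] w_meas[measurable]
    have "(\<lambda>(tz, x). ennreal (w tz x / c tz) * indicator A x) \<in> borel_measurable (TZ \<Otimes>\<^sub>M X)"
      by measurable
    from nn_integral_measurable_subprob_algebra2[OF this K_meas]
    have "(\<lambda>tz. \<integral>\<^sup>+x. ennreal (w tz x / c tz) * indicator A x \<partial>K tz) \<in> borel_measurable TZ" .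
    moreover have "\<And>tz. tz \<in> space TZ \<Longrightarrow> emeasure (qk tz) A = (\<integral>\<^sup>+x. ennreal (w tz x / c tz) * indicator A x \<partial>K tz)"
      unfolding qk_def' using K_sets A wc_meas by (subst emeasure_density) auto
    ultimately show "(\<lambda>tz. emeasure (qk tz) A) \<in> borel_measurable TZ"
      using measurable_cong by (smt (verit))
  qed
  define kQ where "kQ = (\<lambda>tz. distr (qk tz) (R \<Otimes>\<^sub>M TZ) (\<lambda>x. (\<Phi> x, tz)))"
  have kQ_meas: "kQ \<in> measurable PTZ (subprob_algebra (R \<Otimes>\<^sub>M TZ))"
  proof -
    have "case_prod (\<lambda>tz x. (\<Phi> x, tz)) \<in> measurable (TZ \<Otimes>\<^sub>M X) (R \<Otimes>\<^sub>M TZ)" by measurable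
    from measurable_distr2[OF this qk_meas] show ?thesis
      unfolding kQ_def by (subst measurable_cong_sets[OF PTZ(2) refl])
  qed
  have QQ: "rep_reweighted_joint R PTZ K w \<Phi> = PTZ \<bind> kQ"
    by (simp add: rep_reweighted_joint_def kQ_def qk_def)
  define M2 where "M2 = (\<lambda>tz. \<integral>\<^sup>+x. ennreal (l x tz) \<partial>qk tz)"
  define TQ where "TQ = (\<integral>\<^sup>+tz. M2 tz \<partial>PTZ)"
  have nnQ: "(\<integral>\<^sup>+v. ennreal (f v) \<partial>(rep_reweighted_joint R PTZ K w \<Phi>)) = TQ"
  proof -
    have "(\<integral>\<^sup>+v. ennreal (f v) \<partial>(rep_reweighted_joint R PTZ K w \<Phi>)) = (\<integral>\<^sup>+tz. \<integral>\<^sup>+v. ennreal (f v) \<partial>kQ tz \<partial>PTZ)"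
      unfolding QQ by (rule nn_integral_bind[OF _ kQ_meas]) (use f_meas in measurable)
    also have "\<dots> = TQ" unfolding TQ_def M2_def
    proof (rule nn_integral_cong)
      fix tz assume tz: "tz \<in> space PTZ"
      then have tzT: "tz \<in> space TZ" using spPTZ by simp
      have pm: "(\<lambda>x. (\<Phi> x, tz)) \<in> measurable (qk tz) (R \<Otimes>\<^sub>M TZ)"
        by (subst measurable_cong_sets[OF qk_sets[OF tzT] refl]) (use tzT in measurable)
      have "(\<integral>\<^sup>+v. ennreal (f v) \<partial>kQ tz) = (\<integral>\<^sup>+x. ennreal (f (\<Phi> x, tz)) \<partial>qk tz)"
        unfolding kQ_def by (rule nn_integral_distr[OF pm]) (use f_meas in measurable)
      also have "\<dots> = (\<integral>\<^sup>+x. ennreal (l x tz) \<partial>qk tz)"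
        by (intro nn_integral_cong) (simp add: f_def Psi_Phi qk_space[OF tzT])
      finally show "(\<integral>\<^sup>+v. ennreal (f v) \<partial>kQ tz) = (\<integral>\<^sup>+x. ennreal (l x tz) \<partial>qk tz)" .
    qed
    finally show ?thesis .
  qed
  have TQ_fin: "TQ \<noteq> \<infinity>"
    using integrableD(2)[OF int_Q[unfolded f_eq]] nnQ by simp
  have f_measQ: "f \<in> borel_measurable (rep_reweighted_joint R PTZ K w \<Phi>)"
  proof -
    have "sets (PTZ \<bind> kQ) = sets (R \<Otimes>\<^sub>M TZ)"
      using ne kQ_meas by (intro sets_bind) (auto simp: kQ_def)
    then show ?thesis unfolding QQ
      by (subst measurable_cong_sets[OF _ refl]) (auto intro: f_meas)
  qed
  have intQ: "integral\<^sup>L (rep_reweighted_joint R PTZ K w \<Phi>) f = enn2real TQ"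
    using integral_eq_nn_integral[OF f_measQ] f_nonneg nnQ by simp
  have M2_measP: "M2 \<in> borel_measurable PTZ"
  proof -
    have "(\<lambda>(tz, x). ennreal (l x tz)) \<in> borel_measurable (TZ \<Otimes>\<^sub>M X)"
    proof -
      have "(\<lambda>q. (snd q, fst q)) \<in> measurable (TZ \<Otimes>\<^sub>M X) (X \<Otimes>\<^sub>M TZ)" by measurable
      from measurable_compose[OF this l_meas] show ?thesis by (simp add: case_prod_beta')
    qed
    from nn_integral_measurable_subprob_algebra2[OF this qk_meas]
    have "M2 \<in> borel_measurable TZ" by (simp add: M2_def)
    then show ?thesis by (subst measurable_cong_sets[OF PTZ(2) refl])
  qed
  have FL: "factual_loss PTZ (reweighted K w) (exp_loss L h \<Phi> PY) = enn2real TQ"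
  proof -
    have "factual_loss PTZ (reweighted K w) (exp_loss L h \<Phi> PY)
        = (\<integral>tz. (\<integral>x. l x tz \<partial>qk tz) \<partial>PTZ)"
      by (simp add: factual_loss_def l_def qk_def)
    also have "\<dots> = enn2real (\<integral>\<^sup>+tz. ennreal (enn2real (M2 tz)) \<partial>PTZ)"
    proof (rule integral_enn2real[OF M2_measP])
      fix tz assume tz: "tz \<in> space PTZ"
      then have tzT: "tz \<in> space TZ" using spPTZ by simp
      have m: "(\<lambda>x. l x tz) \<in> borel_measurable (qk tz)"
        by (subst measurable_cong_sets[OF qk_sets[OF tzT] refl]) (rule l_sec[OF tzT])
      show "(\<integral>x. l x tz \<partial>qk tz) = enn2real (M2 tz)"
        unfolding M2_def by (rule integral_eq_nn_integral[OF m]) (simp add: l_nonneg)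
    qed
    also have "\<dots> = enn2real TQ"
      using nn_enn2real_eq[OF M2_measP] TQ_fin by (simp add: TQ_def)
    finally show ?thesis .
  qed
  define P where "P = rep_product R PTZ K \<Phi>"
  define Q where "Q = rep_reweighted_joint R PTZ K w \<Phi>"
  have gG: "(\<lambda>v. f v / B) \<in> G"
  proof -
    have "(\<lambda>(r, tz). exp_loss L h \<Phi> PY (\<Psi> r) (fst tz) (snd tz) / B) = (\<lambda>v. f v / B)"
      by (auto simp: fun_eq_iff f_def l_def)
    then show ?thesis using G_mem by simp
  qed
  have "ereal \<bar>(\<integral>v. f v / B \<partial>P) - (\<integral>v. f v / B \<partial>Q)\<bar> \<le> IPM G P Q"
    unfolding IPM_def by (rule SUP_upper2[OF gG]) simp
  moreover have "(\<integral>v. f v / B \<partial>P) - (\<integral>v. f v / B \<partial>Q) = (enn2real T - enn2real TQ) / B"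
    using intP intQ by (simp add: P_def Q_def diff_divide_distrib)
  ultimately have ipm: "ereal (\<bar>enn2real T - enn2real TQ\<bar> / B) \<le> IPM G P Q"
    using B_pos by simp
  have "ereal B * ereal (\<bar>enn2real T - enn2real TQ\<bar> / B) \<le> ereal B * IPM G P Q"
    using ipm B_pos by (intro ereal_mult_left_mono) auto
  then have "ereal (\<bar>enn2real T - enn2real TQ\<bar>) \<le> ereal B * IPM G P Q"
    using B_pos by simp
  then have "ereal (enn2real TQ) + ereal (\<bar>enn2real T - enn2real TQ\<bar>) \<le> ereal (enn2real TQ) + ereal B * IPM G P Q"
    by (rule add_left_mono)
  moreover have "ereal (enn2real T) \<le> ereal (enn2real TQ) + ereal (\<bar>enn2real T - enn2real TQ\<bar>)"
    by simp
  ultimately show ?thesis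
    unfolding CF FL P_def[symmetric] Q_def[symmetric] by (rule order_trans[rotated])
qed

end
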